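(* Let $\Sigma$ be a finite set of symbols, let $\mathbf{x}\in\Sigma^*$, and let $S=\{(T_1,\delta_1),\dots,(T_n,\delta_n)\}$ be a perturbation space with $T_k=(\varphi_k,f_k)$, $\varphi_k:\Sigma^{s_k}\to\{0,1\}$, $f_k:\Sigma^{s_k}\to 2^{\Sigma^{t_k}}$, $s_k\ge 1$, $t_k\ge 0$. For $S'\in\mathcal{D}(S)$ and integers $i,j$ let $$H_{i,j}^{S'}=\{\mathrm{lstm}(\mathbf{z},h_0)\mid \mathbf{z}\in S'^{=}(\mathbf{x}_{1:j}),\ |\mathbf{z}|=i\},$$ with the convention $H_{i,j}^{S'}=\emptyset$ whenever $i<0$ or $j<0$. Then $H_{0,0}^{\varnothing}=\{0^d\}$, and for every $S'=\{(T_k,\delta'_k)\}_k\in\mathcal{D}(S)$ and all integers $i\ge 0$, $j\ge 1$, $$H_{i,j}^{S'}=\{\mathrm{lstm}(x_j,h)\mid h\in H_{i-1,j-1}^{S'}\}\ \cup \bigcup_{\substack{1\le k\le n,\ \delta'_k\ge 1,\ j\ge s_k\\ \varphi_k(\mathbf{x}_{j-s_k+1:j})=1}}\{\mathrm{lstm}(\mathbf{z},h)\mid \mathbf{z}\in f_k(\mathbf{x}_{j-s_k+1:j}),\ h\in H_{i-t_k,\,j-s_k}^{S'_{k\downarrow}}\}.$$ That is, the sets $H_{i,j}^{S'}$ defined directly coincide with those computed bottom-up from the base case $H_{0,0}^{\varnothing}=\{0^d\}$ by this recurrence.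
   Context: Strings: $\Sigma^*$ is the set of finite strings over $\Sigma$; for $\mathbf{x}\in\Sigma^*$, $x_i$ is its $i$-th symbol, $\mathbf{x}_{a:b}=x_a\cdots x_b$ (empty if $b<a$), $|\mathbf{x}|$ its length, $\epsilon$ the empty string. A string transformation is a pair $T=(\varphi,f)$ with match function $\varphi:\Sigma^{s}\to\{0,1\}$ and replace function $f:\Sigma^{s}\to 2^{\Sigma^{t}}$. A perturbation space is a finite set $S=\{(T_1,\delta_1),\dots,(T_n,\delta_n)\}$ with $\delta_k\in\mathbb{N}$. Its tight version $S^{=}$ maps a string $\mathbf{x}$ to the set $S^{=}(\mathbf{x})$ of all strings $\mathbf{z}$ for which there is a factorization $\mathbf{x}=\mathbf{u}_0\mathbf{w}_1\mathbf{u}_1\cdots\mathbf{w}_m\mathbf{u}_m$ (pairwise non-overlapping matched substrings $\mathbf{w}_l$) and indices $k_1,\dots,k_m$ with $\varphi_{k_l}(\mathbf{w}_l)=1$, $\mathbf{z}=\mathbf{u}_0\mathbf{w}'_1\mathbf{u}_1\cdots\mathbf{w}'_m\mathbf{u}_m$ with $\mathbf{w}'_l\in f_{k_l}(\mathbf{w}_l)$, and such that for each $k$ exactly $\delta_k$ of the $k_l$ equal $k$ (the ordinary space $S(\mathbf{x})$ is defined the same way with "at most $\delta_k$"). The decomposition $\mathcal{D}(S)$ is the set of all perturbation spaces $\{(T_1,\delta'_1),\dots,(T_n,\delta'_n)\}$ with $0\le\delta'_k\le\delta_k$ (so $|\mathcal{D}(S)|=\prod_k(\delta_k+1)$); $\varnothing$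 denotes the element with all $\delta'_k=0$, for which $\varnothing^{=}(\mathbf{x})=\{\mathbf{x}\}$. For $S'\in\mathcal{D}(S)$ with $\delta'_k\ge1$, $S'_{k\downarrow}$ is $S'$ with $\delta'_k$ decreased by $1$. LSTM: $\mathrm{lstm}:\Sigma\times\mathbb{R}^d\to\mathbb{R}^d$ is a fixed function (an LSTM cell applied to the symbol's embedding and the concatenated hidden/cell state); it is extended to strings by $\mathrm{lstm}(\epsilon,h)=h$ and $\mathrm{lstm}(\mathbf{z},h)=\mathrm{lstm}(z_{|\mathbf{z}|},\mathrm{lstm}(\mathbf{z}_{1:|\mathbf{z}|-1},h))$; $h_0=0^d$. *)

theory Defs
  imports "HOL-Analysis.Analysis"
begin

text \<open>A perturbation space with n transformations
  is given by index-k families: match functions phi k, replace functions f k, match length s k,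
  replacement length t k, budgets delta k (k < n).  A decomposition element is a budget
  function D with D k \<le> delta k for k < n.\<close>

text \<open>Tight perturbation space: z arises from x by replacing pairwise non-overlapping matched
  substrings, with transformation k used exactly D k times. The factorization
  x = u0 w1 u1 ... wm um is represented by u0 and the list ps = [(w1,u1),...,(wm,um)].\<close>
definition tight_space ::
  "nat \<Rightarrow> (nat \<Rightarrow> 'a list \<Rightarrow> bool) \<Rightarrow> (nat \<Rightarrow> 'a list \<Rightarrow> 'a list set) \<Rightarrow> (nat \<Rightarrow> nat)
   \<Rightarrow> (nat \<Rightarrow> nat) \<Rightarrow> 'a list \<Rightarrow> 'a list set" where
  "tight_space n phi f s D x = {z. \<exists>u0 ps ks ws'.
      length ks = length ps \<and> length ws' = length ps \<and>
      x = u0 @ concat (map (\<lambda>(w, u). w @ u) ps) \<and>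
      z = u0 @ concat (map2 (\<lambda>w' (w, u). w' @ u) ws' ps) \<and>
      (\<forall>l < length ps. ks ! l < n \<and> length (fst (ps ! l)) = s (ks ! l) \<and>
          phi (ks ! l) (fst (ps ! l)) \<and> ws' ! l \<in> f (ks ! l) (fst (ps ! l))) \<and>
      (\<forall>k < n. length (filter (\<lambda>k'. k' = k) ks) = D k)}"

definition lstm_str :: "('a \<Rightarrow> 'h \<Rightarrow> 'h) \<Rightarrow> 'a list \<Rightarrow> 'h \<Rightarrow> 'h" where
  "lstm_str cell z h = fold cell z h"

text \<open>Substring x_{a:b} (1-based, inclusive), empty if b < a.\<close>
definition substr :: "'a list \<Rightarrow> int \<Rightarrow> int \<Rightarrow> 'a list" where
  "substr x a b = drop (nat (a - 1)) (take (nat b) x)"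

definition Hset ::
  "('a \<Rightarrow> real^'d \<Rightarrow> real^'d) \<Rightarrow> nat \<Rightarrow> (nat \<Rightarrow> 'a list \<Rightarrow> bool) \<Rightarrow> (nat \<Rightarrow> 'a list \<Rightarrow> 'a list set)
   \<Rightarrow> (nat \<Rightarrow> nat) \<Rightarrow> 'a list \<Rightarrow> (nat \<Rightarrow> nat) \<Rightarrow> int \<Rightarrow> int \<Rightarrow> (real^'d) set" where
  "Hset cell n phi f s x D i j =
     (if i < 0 \<or> j < 0 then {}
      else {lstm_str cell z 0 | z. z \<in> tight_space n phi f s D (substr x 1 j) \<and> int (length z) = i})"

end

theory Submission
  imports Defs
begin


definition T2 :: "nat \<Rightarrow> (nat \<Rightarrow> 'a list \<Rightarrow> bool) \<Rightarrow> (nat \<Rightarrow> 'a list \<Rightarrow> 'a list set) \<Rightarrow> (nat \<Rightarrow> nat)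
   \<Rightarrow> (nat \<Rightarrow> nat) \<Rightarrow> 'a list \<Rightarrow> 'a list set" where
  "T2 n phi f s D y = {z. \<exists>u0 (qs :: (nat \<times> 'a list \<times> 'a list \<times> 'a list) list).
      y = u0 @ concat (map (\<lambda>(k,w,w',u). w @ u) qs) \<and>
      z = u0 @ concat (map (\<lambda>(k,w,w',u). w' @ u) qs) \<and>
      (\<forall>(k,w,w',u) \<in> set qs. k < n \<and> length w = s k \<and> phi k w \<and> w' \<in> f k w) \<and>
      (\<forall>k < n. length (filter (\<lambda>k'. k' = k) (map fst qs)) = D k)}"

lemma tight_eq: "tight_space n phi f s D y = T2 n phi f s D y"
proof (intro set_eqI iffI)
  fix z assume "z \<in> tight_space n phi f s D y"
  then obtain u0 ps ks ws' where L: "length ks = length ps" "length ws' = length ps"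
    and y: "y = u0 @ concat (map (\<lambda>(w, u). w @ u) ps)"
    and z: "z = u0 @ concat (map2 (\<lambda>w' (w, u). w' @ u) ws' ps)"
    and P: "\<forall>l < length ps. ks ! l < n \<and> length (fst (ps ! l)) = s (ks ! l) \<and>
          phi (ks ! l) (fst (ps ! l)) \<and> ws' ! l \<in> f (ks ! l) (fst (ps ! l))"
    and C: "\<forall>k < n. length (filter (\<lambda>k'. k' = k) ks) = D k"
    unfolding tight_space_def by blast
  define qs where "qs = map (\<lambda>l. (ks!l, fst(ps!l), ws'!l, snd(ps!l))) [0..<length ps]"
  have 1: "map (\<lambda>(w,u). w@u) ps = map (\<lambda>(k,w,w',u). w@u) qs"
    by (rule nth_equalityI) (auto simp: qs_def case_prod_beta)
  have 2: "map2 (\<lambda>w' (w,u). w'@u) ws' ps = map (\<lambda>(k,w,w',u). w'@u) qs"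
    by (rule nth_equalityI) (auto simp: qs_def case_prod_beta L)
  have 3: "map fst qs = ks"
    by (rule nth_equalityI) (auto simp: qs_def L)
  have 4: "\<forall>(k,w,w',u) \<in> set qs. k < n \<and> length w = s k \<and> phi k w \<and> w' \<in> f k w"
    using P by (auto simp: qs_def)
  show "z \<in> T2 n phi f s D y" unfolding T2_def mem_Collect_eq
    apply (rule exI[of _ u0], rule exI[of _ qs])
    using y z 1 2 3 4 C by simp
next
  fix z assume "z \<in> T2 n phi f s D y"
  then obtain u0 and qs :: "(nat \<times> 'a list \<times> 'a list \<times> 'a list) list" where
      y: "y = u0 @ concat (map (\<lambda>(k,w,w',u). w @ u) qs)" and
      z: "z = u0 @ concat (map (\<lambda>(k,w,w',u). w' @ u) qs)" and
      P: "\<forall>(k,w,w',u) \<in> set qs. k < n \<and> length w = s k \<and> phi k w \<and> w' \<in> f k w" and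
      C: "\<forall>k < n. length (filter (\<lambda>k'. k' = k) (map fst qs)) = D k"
    unfolding T2_def by blast
  define ps where "ps = map (\<lambda>(k,w,w',u). (w,u)) qs"
  define ks where "ks = map fst qs"
  define ws' where "ws' = map (\<lambda>(k,w,w',u). w') qs"
  have 1: "map (\<lambda>(w,u). w@u) ps = map (\<lambda>(k,w,w',u). w@u) qs"
    by (auto simp: ps_def case_prod_beta)
  have 2: "map2 (\<lambda>w' (w,u). w'@u) ws' ps = map (\<lambda>(k,w,w',u). w'@u) qs"
    by (rule nth_equalityI) (auto simp: ps_def ws'_def case_prod_beta)
  have 4: "\<forall>l < length ps. ks ! l < n \<and> length (fst (ps ! l)) = s (ks ! l) \<and>
          phi (ks ! l) (fst (ps ! l)) \<and> ws' ! l \<in> f (ks ! l) (fst (ps ! l))"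
  proof (intro allI impI)
    fix l assume "l < length ps"
    then have "qs ! l \<in> set qs" by (simp add: ps_def)
    with P \<open>l < length ps\<close> show "ks ! l < n \<and> length (fst (ps ! l)) = s (ks ! l) \<and>
          phi (ks ! l) (fst (ps ! l)) \<and> ws' ! l \<in> f (ks ! l) (fst (ps ! l))"
      by (auto simp: ps_def ks_def ws'_def case_prod_beta)
  qed
  have L: "length ks = length ps" "length ws' = length ps" by (auto simp: ks_def ws'_def ps_def)
  show "z \<in> tight_space n phi f s D y" unfolding tight_space_def mem_Collect_eq
    apply (rule exI[of _ u0], rule exI[of _ ps], rule exI[of _ ks], rule exI[of _ ws'])
    using y z 1 2 4 C L ks_def by simp
qed

abbreviation cnt :: "(nat \<times> 'a list \<times> 'a list \<times> 'a list) list \<Rightarrow> nat \<Rightarrow> nat" where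
  "cnt qs k \<equiv> length (filter (\<lambda>k'. k' = k) (map fst qs))"

lemma T2_I:
  assumes "y = uu @ concat (map (\<lambda>(k,w,w',u). w @ u) qs)"
    "z = uu @ concat (map (\<lambda>(k,w,w',u). w' @ u) qs)"
    "\<forall>(k,w,w',u) \<in> set qs. k < n \<and> length w = s k \<and> phi k w \<and> w' \<in> f k w"
    "\<forall>k < n. cnt qs k = D k"
  shows "z \<in> T2 n phi f s D y"
  using assms unfolding T2_def by blast

lemma T2_E:
  assumes "z \<in> T2 n phi f s D y"
  obtains uu qs where "y = uu @ concat (map (\<lambda>(k,w,w',u). w @ u) qs)"
    "z = uu @ concat (map (\<lambda>(k,w,w',u). w' @ u) qs)"
    "\<forall>(k,w,w',u) \<in> set qs. k < n \<and> length w = s k \<and> phi k w \<and> w' \<in> f k w"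
    "\<forall>k < n. cnt qs k = D k"
  using assms unfolding T2_def by blast

lemma T2_char: "z \<in> T2 n phi f s D y \<longleftrightarrow>
 (y = [] \<and> z = [] \<and> (\<forall>k<n. D k = 0)) \<or>
 (\<exists>y' c z'. y = y'@[c] \<and> z = z'@[c] \<and> z' \<in> T2 n phi f s D y') \<or>
 (\<exists>k y1 w w' z''. k<n \<and> D k \<ge> 1 \<and> y = y1@w \<and> length w = s k \<and> phi k w \<and> w' \<in> f k w
    \<and> z = z''@w' \<and> z'' \<in> T2 n phi f s (D(k:=D k - 1)) y1)"
  (is "?L \<longleftrightarrow> ?A \<or> ?B \<or> ?C")
proof
  assume ?L
  then obtain uu qs where y: "y = uu @ concat (map (\<lambda>(k,w,w',u). w @ u) qs)"
    and z: "z = uu @ concat (map (\<lambda>(k,w,w',u). w' @ u) qs)"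
    and P: "\<forall>(k,w,w',u) \<in> set qs. k < n \<and> length w = s k \<and> phi k w \<and> w' \<in> f k w"
    and C: "\<forall>k < n. cnt qs k = D k" by (rule T2_E)
  show "?A \<or> ?B \<or> ?C"
  proof (cases qs rule: rev_cases)
    case Nil
    show ?thesis
    proof (cases "y = []")
      case True then show ?thesis using Nil y z C by auto
    next
      case False
      then obtain y' c where yc: "y = y'@[c]" by (metis rev_exhaust)
      have "y' \<in> T2 n phi f s D y'"
        by (rule T2_I[where uu=y' and qs="[]"]) (use C Nil in auto)
      then show ?thesis using yc Nil y z by auto
    qed
  next
    case (snoc qs0 q)
    obtain k w w' u where q: "q = (k,w,w',u)" by (cases q) auto
    show ?thesis
    proof (cases "u = []")
      case True
      have k: "k < n" "length w = s k" "phi k w" "w' \<in> f k w" using P snoc q by auto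
      have ck: "cnt qs k = cnt qs0 k + 1" using snoc q by simp
      have Dk: "D k \<ge> 1" using C k ck by auto
      have "uu @ concat (map (\<lambda>(k,w,w',u). w' @ u) qs0) \<in> T2 n phi f s (D(k:=D k - 1))
          (uu @ concat (map (\<lambda>(k,w,w',u). w @ u) qs0))"
      proof (rule T2_I[OF refl refl])
        show "\<forall>(k,w,w',u) \<in> set qs0. k < n \<and> length w = s k \<and> phi k w \<and> w' \<in> f k w"
          using P snoc by auto
        show "\<forall>k' < n. cnt qs0 k' = (D(k:=D k - 1)) k'"
        proof (intro allI impI)
          fix k' assume "k' < n"
          then show "cnt qs0 k' = (D(k:=D k - 1)) k'"
            using C snoc q ck by (cases "k' = k") auto
        qed
      qed
      moreover have "y = (uu @ concat (map (\<lambda>(k,w,w',u). w @ u) qs0)) @ w"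
        using y snoc q True by simp
      moreover have "z = (uu @ concat (map (\<lambda>(k,w,w',u). w' @ u) qs0)) @ w'"
        using z snoc q True by simp
      ultimately have ?C using k Dk
        by (intro exI[of _ k] exI[of _ "uu @ concat (map (\<lambda>(k,w,w',u). w @ u) qs0)"]
          exI[of _ w] exI[of _ w'] exI[of _ "uu @ concat (map (\<lambda>(k,w,w',u). w' @ u) qs0)"]) simp
      then show ?thesis by (rule disjI2[OF disjI2])
    next
      case False
      then obtain u' c where uc: "u = u'@[c]" by (metis rev_exhaust)
      have "uu @ concat (map (\<lambda>(k,w,w',u). w' @ u) (qs0 @ [(k,w,w',u')])) \<in> T2 n phi f s D
          (uu @ concat (map (\<lambda>(k,w,w',u). w @ u) (qs0 @ [(k,w,w',u')])))"
        by (rule T2_I[OF refl refl]) (use P C snoc q in auto)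
      moreover have "y = (uu @ concat (map (\<lambda>(k,w,w',u). w @ u) (qs0 @ [(k,w,w',u')]))) @ [c]"
        using y snoc q uc by simp
      moreover have "z = (uu @ concat (map (\<lambda>(k,w,w',u). w' @ u) (qs0 @ [(k,w,w',u')]))) @ [c]"
        using z snoc q uc by simp
      ultimately have ?B by blast
      then show ?thesis by (rule disjI2[OF disjI1])
    qed
  qed
next
  assume "?A \<or> ?B \<or> ?C"
  then show ?L
  proof (elim disjE exE conjE)
    assume "y = []" "z = []" "\<forall>k<n. D k = 0"
    then show ?L by (intro T2_I[where uu="[]" and qs="[]"]) auto
  next
    fix y' c z' assume yz: "y = y'@[c]" "z = z'@[c]" and M: "z' \<in> T2 n phi f s D y'"
    from M obtain uu qs where y: "y' = uu @ concat (map (\<lambda>(k,w,w',u). w @ u) qs)"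
      and z: "z' = uu @ concat (map (\<lambda>(k,w,w',u). w' @ u) qs)"
      and P: "\<forall>(k,w,w',u) \<in> set qs. k < n \<and> length w = s k \<and> phi k w \<and> w' \<in> f k w"
      and C: "\<forall>k < n. cnt qs k = D k" by (rule T2_E)
    show ?L
    proof (cases qs rule: rev_cases)
      case Nil
      then show ?thesis using y z yz C by (intro T2_I[where uu="uu@[c]" and qs="[]"]) auto
    next
      case (snoc qs0 q)
      obtain k w w' u where q: "q = (k,w,w',u)" by (cases q) auto
      show ?thesis
        by (rule T2_I[where uu=uu and qs="qs0@[(k,w,w',u@[c])]"]) (use y z yz P C snoc q in auto)
    qed
  next
    fix k y1 w w' z'' assume A: "k<n" "D k \<ge> 1" "y = y1@w" "length w = s k" "phi k w" "w' \<in> f k w"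
      "z = z''@w'" and M: "z'' \<in> T2 n phi f s (D(k:=D k - 1)) y1"
    from M obtain uu qs where y: "y1 = uu @ concat (map (\<lambda>(k,w,w',u). w @ u) qs)"
      and z: "z'' = uu @ concat (map (\<lambda>(k,w,w',u). w' @ u) qs)"
      and P: "\<forall>(k,w,w',u) \<in> set qs. k < n \<and> length w = s k \<and> phi k w \<and> w' \<in> f k w"
      and C: "\<forall>k' < n. cnt qs k' = (D(k:=D k - 1)) k'" by (rule T2_E)
    show ?L
    proof (rule T2_I[where uu=uu and qs="qs@[(k,w,w',[])]"])
      show "\<forall>k'<n. cnt (qs @ [(k, w, w', [])]) k' = D k'"
      proof (intro allI impI)
        fix k' assume "k' < n"
        then show "cnt (qs @ [(k, w, w', [])]) k' = D k'"
          using C A by (cases "k' = k") auto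
      qed
    qed (use y z A P in auto)
  qed
qed



lemma lstm_app: "lstm_str cell (z@w) h = lstm_str cell w (lstm_str cell z h)"
  by (simp add: lstm_str_def)

lemma lstm_nil: "lstm_str cell [] h = h"
  by (simp add: lstm_str_def)

lemma Hset_alt:
  assumes "0 \<le> i"
  shows "Hset cell n phi f s x D i (int J) =
    {lstm_str cell z 0 | z. z \<in> T2 n phi f s D (take J x) \<and> int (length z) = i}"
  using assms by (simp add: Hset_def substr_def tight_eq)

lemma split_take:
  assumes "take J x = y1 @ w" "length w = m" "J \<le> length x"
  shows "m \<le> J \<and> y1 = take (J - m) x \<and> w = drop (J - m) (take J x)"
proof -
  have "length (take J x) = J" using assms(3) by simp
  then have L: "length y1 + m = J" using assms(1,2) by simp
  have L2: "length y1 = J - m" using L by arith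
  have "y1 = take (length y1) (take J x)" using assms(1) by simp
  then have "y1 = take (J - m) x" using L2 by simp
  moreover have "w = drop (length y1) (y1 @ w)" by simp
  then have "w = drop (J - m) (take J x)" using assms(1) L by simp
  ultimately show ?thesis using L by simp
qed

lemma substr_eq:
  assumes "m \<le> J"
  shows "substr x (int J - int m + 1) (int J) = drop (J - m) (take J x)"
  using assms by (simp add: substr_def nat_diff_distrib)

lemma Hset_mem:
  "h \<in> Hset cell n phi f s x D i (int J) \<longleftrightarrow>
    (\<exists>z. h = lstm_str cell z 0 \<and> z \<in> T2 n phi f s D (take J x) \<and> int (length z) = i)"
  by (cases "i < 0") (auto simp: Hset_def substr_def tight_eq)

theorem lemma4p2:
  fixes cell :: "'a::finite \<Rightarrow> real^'d \<Rightarrow> real^'d"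
    and x :: "'a list"
    and n :: nat
    and phi :: "nat \<Rightarrow> 'a list \<Rightarrow> bool"
    and f :: "nat \<Rightarrow> 'a list \<Rightarrow> 'a list set"
    and s t delta :: "nat \<Rightarrow> nat"
  assumes s_pos: "\<forall>k < n. s k \<ge> 1"
    and f_len: "\<forall>k < n. \<forall>w. length w = s k \<longrightarrow> (\<forall>z \<in> f k w. length z = t k)"
  shows "Hset cell n phi f s x (\<lambda>_. 0) 0 0 = {0}
    \<and> (\<forall>D. (\<forall>k < n. D k \<le> delta k) \<longrightarrow>
        (\<forall>i j. 0 \<le> i \<and> 1 \<le> j \<and> j \<le> int (length x) \<longrightarrow>
          Hset cell n phi f s x D i j =
            (cell (x ! nat (j - 1))) ` Hset cell n phi f s x D (i - 1) (j - 1)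
            \<union> (\<Union>k \<in> {k. k < n \<and> D k \<ge> 1 \<and> j \<ge> int (s k) \<and>
                          phi k (substr x (j - int (s k) + 1) j)}.
                 {lstm_str cell z h | z h. z \<in> f k (substr x (j - int (s k) + 1) j) \<and>
                    h \<in> Hset cell n phi f s x (D(k := D k - 1)) (i - int (t k)) (j - int (s k))})))"
proof (intro conjI allI impI)
  have T0: "z \<in> T2 n phi f s (\<lambda>_. 0) [] \<longleftrightarrow> z = []" for z
    using T2_char[of z n phi f s "\<lambda>_. 0" "[]"] by auto
  show "Hset cell n phi f s x (\<lambda>_. 0) 0 0 = {0}"
    using Hset_mem[of _ cell n phi f s x "\<lambda>_. 0" 0 0] T0 by (auto simp: lstm_nil)
next
  fix D :: "nat \<Rightarrow> nat" and i j :: int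
  assume "0 \<le> i \<and> 1 \<le> j \<and> j \<le> int (length x)"
  then have i0: "0 \<le> i" and j1: "1 \<le> j" and jx: "j \<le> int (length x)" by auto
  obtain J where jJ: "j = int J" using j1 by (metis nonneg_int_cases zero_le_one order_trans)
  have J1: "1 \<le> J" and Jx: "J \<le> length x" using j1 jx jJ by auto
  have Ysplit: "take J x = take (J-1) x @ [x ! (J-1)]"
    using take_Suc_conv_app_nth[of "J-1" x] J1 Jx by simp
  have jm1: "j - 1 = int (J - 1)" using jJ J1 by simp
  have natj: "nat (j - 1) = J - 1" using jm1 by simp
  define K where "K = {k. k < n \<and> D k \<ge> 1 \<and> j \<ge> int (s k) \<and>
                          phi k (substr x (j - int (s k) + 1) j)}"
  let ?R2 = "\<Union>k \<in> K. {lstm_str cell z h | z h. z \<in> f k (substr x (j - int (s k) + 1) j) \<and>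
                    h \<in> Hset cell n phi f s x (D(k := D k - 1)) (i - int (t k)) (j - int (s k))}"
  show "Hset cell n phi f s x D i j =
            (cell (x ! nat (j - 1))) ` Hset cell n phi f s x D (i - 1) (j - 1) \<union> ?R2"
    unfolding K_def[symmetric]
  proof (rule set_eqI, rule iffI)
    fix h assume "h \<in> Hset cell n phi f s x D i j"
    then obtain z where hz: "h = lstm_str cell z 0" and zT: "z \<in> T2 n phi f s D (take J x)"
      and zl: "int (length z) = i" using Hset_mem jJ by metis
    have "take J x \<noteq> []" using J1 Jx by (cases x) auto
    then consider
      (B) y' c z' where "take J x = y'@[c]" "z = z'@[c]" "z' \<in> T2 n phi f s D y'"
    | (C) k y1 w w' z'' where "k<n" "D k \<ge> 1" "take J x = y1@w" "length w = s k" "phi k w"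
        "w' \<in> f k w" "z = z''@w'" "z'' \<in> T2 n phi f s (D(k:=D k - 1)) y1"
      using zT T2_char[of z n phi f s D "take J x"] by blast
    then show "h \<in> (cell (x ! nat (j - 1))) ` Hset cell n phi f s x D (i - 1) (j - 1) \<union> ?R2"
    proof cases
      case B
      have st: "1 \<le> J \<and> y' = take (J - 1) x \<and> [c] = drop (J - 1) (take J x)"
        using split_take[OF B(1) _ Jx] by simp
      have c: "c = x ! (J-1)" using B(1) Ysplit st by simp
      have "lstm_str cell z' 0 \<in> Hset cell n phi f s x D (i - 1) (j - 1)"
      proof -
        have zl': "int (length z') = i - 1" using B(2) zl by simp
        have "z' \<in> T2 n phi f s D (take (J - 1) x)" using B(3) st by simp
        then show ?thesis unfolding jm1 Hset_mem using zl' by blast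
      qed
      moreover have "h = cell (x ! nat (j - 1)) (lstm_str cell z' 0)"
        using hz B c natj by (simp add: lstm_app lstm_str_def)
      ultimately show ?thesis by blast
    next
      case C
      have st: "s k \<le> J \<and> y1 = take (J - s k) x \<and> w = drop (J - s k) (take J x)"
        using split_take[OF C(3) C(4) Jx] .
      have w'l: "length w' = t k" using f_len C by blast
      have sub: "substr x (j - int (s k) + 1) j = w"
        using substr_eq[of "s k" J x] st jJ by simp
      have kK: "k \<in> K" unfolding K_def using C st sub jJ by auto
      have jsk: "j - int (s k) = int (J - s k)" using st jJ by simp
      have "lstm_str cell z'' 0 \<in> Hset cell n phi f s x (D(k := D k - 1)) (i - int (t k)) (j - int (s k))"
        unfolding jsk Hset_mem using C st zl w'l by auto
      moreover have "h = lstm_str cell w' (lstm_str cell z'' 0)"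
        using hz C by (simp add: lstm_app)
      ultimately have "h \<in> {lstm_str cell z h | z h. z \<in> f k (substr x (j - int (s k) + 1) j) \<and>
                    h \<in> Hset cell n phi f s x (D(k := D k - 1)) (i - int (t k)) (j - int (s k))}"
        using C sub by blast
      then show ?thesis using kK by blast
    qed
  next
    fix h assume "h \<in> (cell (x ! nat (j - 1))) ` Hset cell n phi f s x D (i - 1) (j - 1) \<union> ?R2"
    then consider (B) h' where "h = cell (x ! nat (j - 1)) h'" "h' \<in> Hset cell n phi f s x D (i - 1) (j - 1)"
      | (C) k w' h'' where "k \<in> K" "h = lstm_str cell w' h''" "w' \<in> f k (substr x (j - int (s k) + 1) j)"
          "h'' \<in> Hset cell n phi f s x (D(k := D k - 1)) (i - int (t k)) (j - int (s k))"
      by blast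
    then show "h \<in> Hset cell n phi f s x D i j"
    proof cases
      case B
      obtain z' where hz: "h' = lstm_str cell z' 0" and zT: "z' \<in> T2 n phi f s D (take (J-1) x)"
        and zl: "int (length z') = i - 1" using B(2) unfolding jm1 Hset_mem by blast
      have "z' @ [x ! (J-1)] \<in> T2 n phi f s D (take J x)"
        unfolding T2_char[of _ n phi f s D "take J x"] using Ysplit zT by blast
      moreover have "h = lstm_str cell (z' @ [x ! (J-1)]) 0"
        using B hz natj by (simp add: lstm_app lstm_str_def)
      ultimately show ?thesis unfolding jJ Hset_mem using zl by force
    next
      case C
      have k: "k < n" "D k \<ge> 1" "j \<ge> int (s k)" "phi k (substr x (j - int (s k) + 1) j)"
        using C(1) unfolding K_def by auto
      have skJ: "s k \<le> J" using k jJ by simp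
      have jsk: "j - int (s k) = int (J - s k)" using skJ jJ by simp
      define w where "w = drop (J - s k) (take J x)"
      have sub: "substr x (j - int (s k) + 1) j = w"
        using substr_eq[of "s k" J x] skJ jJ w_def by simp
      have wl: "length w = s k" using skJ Jx w_def by simp
      have w'l: "length w' = t k" using f_len C(3) k(1) wl sub by blast
      have tw: "take J x = take (J - s k) x @ w"
        unfolding w_def using skJ by (metis append_take_drop_id take_take min.absorb1 diff_le_self)
      obtain z'' where hz: "h'' = lstm_str cell z'' 0"
        and zT: "z'' \<in> T2 n phi f s (D(k := D k - 1)) (take (J - s k) x)"
        and zl: "int (length z'') = i - int (t k)" using C(4) unfolding jsk Hset_mem by blast
      have "z'' @ w' \<in> T2 n phi f s D (take J x)"
        unfolding T2_char[of _ n phi f s D "take J x"]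
        using k(1,2) tw wl k(4) sub C(3) zT by blast
      moreover have "h = lstm_str cell (z'' @ w') 0"
        using C hz by (simp add: lstm_app)
      ultimately show ?thesis unfolding jJ Hset_mem using zl w'l by force
    qed
  qed
qed

end
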